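(* Let $\Omega=\bigcup_{j=1}^n (a_j,b_j)\subseteq\mathbb{R}$ be a finite union of bounded open intervals. Let $A\subseteq\mathbb{R}$ be a set with positive minimum gap $\delta$, i.e. $|a-a'|\ge\delta$ for all distinct $a,a'\in A$. Then there is a constant $C>0$, depending only on $\Omega$ and $\delta$, such that for every $R>0$, $$\sum_{a\in A,\ |a|>R} \left|\widehat{\chi_\Omega}(a)\right|^2 \le \frac{C}{R}.$$
   Context: $\chi_\Omega$ denotes the indicator function of $\Omega$, and the Fourier transform is $\widehat{f}(\xi)=\int_{\mathbb{R}} f(x)e^{-2\pi i x\xi}\,dx$. *)

theory Defs
  imports "HOL-Analysis.Analysis"
begin

definition indicator_fourier :: "real set \<Rightarrow> real \<Rightarrow> complex" where
  "indicator_fourier S \<xi> = integral S (\<lambda>x. cis (- 2 * pi * x * \<xi>))"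

end

theory Submission
  imports Defs
begin

definition ef :: "real \<Rightarrow> real \<Rightarrow> complex" where "ef \<xi> x = cis (- 2 * pi * x * \<xi>)"

lemma ef_integrable: "S \<in> lmeasurable \<Longrightarrow> ef \<xi> integrable_on S"
proof -
  assume S: "S \<in> lmeasurable"
  have "ef \<xi> absolutely_integrable_on S"
  proof (rule measurable_bounded_by_integrable_imp_absolutely_integrable[where g="\<lambda>_. 1"])
    show "ef \<xi> \<in> borel_measurable (lebesgue_on S)"
      by (rule continuous_imp_measurable_on_sets_lebesgue) (auto simp: ef_def intro!: continuous_intros fmeasurableD S)
    show "S \<in> sets lebesgue" using S by (rule fmeasurableD)
    show "(\<lambda>_. 1::real) integrable_on S" using S by (rule integrable_on_const)
    show "\<And>x. x \<in> S \<Longrightarrow> norm (ef \<xi> x) \<le> 1" by (simp add: ef_def)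
  qed
  then show ?thesis using set_lebesgue_integral_eq_integral(1) by blast
qed

lemma ef_Un:
  assumes "S \<in> lmeasurable" "T \<in> lmeasurable"
  shows "integral (S \<union> T) (ef \<xi>) = integral S (ef \<xi>) + integral T (ef \<xi>) - integral (S \<inter> T) (ef \<xi>)"
proof -
  let ?r = "\<lambda>U x. if x \<in> U then ef \<xi> x else 0"
  have i: "?r U integrable_on UNIV" if "U \<in> lmeasurable" for U
    using ef_integrable[OF that] integrable_restrict_UNIV by blast
  have "?r (S \<union> T) = (\<lambda>x. ?r S x + ?r T x - ?r (S \<inter> T) x)" by auto
  then have "integral (S \<union> T) (ef \<xi>) = integral UNIV (\<lambda>x. ?r S x + ?r T x - ?r (S \<inter> T) x)"
    by (metis integral_restrict_UNIV)
  also have "\<dots> = integral UNIV (?r S) + integral UNIV (?r T) - integral UNIV (?r (S \<inter> T))"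
  proof -
    have a: "?r S integrable_on UNIV" "?r T integrable_on UNIV" "?r (S \<inter> T) integrable_on UNIV"
      using i assms fmeasurable.Int by blast+
    show ?thesis
      by (subst integral_diff) (auto intro!: integrable_add a a(3)[simplified] simp: integral_add[OF a(1,2)])
  qed
  finally show ?thesis by (simp only: integral_restrict_UNIV)
qed

lemma UN_lmeas: "(\<Union>j<(n::nat). {a j<..<b j::real}) \<in> lmeasurable"
  by (rule fmeasurable.finite_UN) auto

lemma ef_int_le_len:
  assumes "\<alpha> \<le> \<beta>" shows "norm (integral {\<alpha><..<\<beta>} (ef \<xi>)) \<le> \<beta> - \<alpha>"
proof -
  have "ef \<xi> integrable_on {\<alpha>..\<beta>}" by (rule ef_integrable) auto
  then have "(ef \<xi> has_integral integral {\<alpha>..\<beta>} (ef \<xi>)) {\<alpha>..\<beta>}" by blast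
  from has_integral_bound_real[where S="{}" and B=1, OF _ _ this]
  have "norm (integral {\<alpha>..\<beta>} (ef \<xi>)) \<le> \<beta> - \<alpha>" using assms by (auto simp: ef_def)
  then show ?thesis using assms by (simp add: integral_open_interval_real)
qed

lemma ef_int_le_xi:
  assumes "\<alpha> \<le> \<beta>" "\<xi> \<noteq> 0" shows "norm (integral {\<alpha><..<\<beta>} (ef \<xi>)) \<le> 1 / (pi * \<bar>\<xi>\<bar>)"
proof -
  define c where "c = - 2 * pi * \<xi>"
  have c0: "c \<noteq> 0" using assms by (simp add: c_def)
  define F where "F x = (- \<i> / of_real c) * cis (c * x)" for x
  have d: "(F has_vector_derivative ef \<xi> x) (at x within {\<alpha>..\<beta>})" for x
    unfolding has_vector_derivative_def F_def
  proof -
    have "((\<lambda>x. c * x) has_derivative (\<lambda>t. c * t)) (at x within {\<alpha>..\<beta>})"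
      by (intro derivative_intros)
    from has_derivative_mult_right[OF has_derivative_cis[OF this], of "- \<i> / of_real c"]
    show "((\<lambda>x. (- \<i> / of_real c) * cis (c * x)) has_derivative (\<lambda>t. t *\<^sub>R ef \<xi> x)) (at x within {\<alpha>..\<beta>})"
      apply (rule has_derivative_eq_rhs)
      using c0 by (auto simp: ef_def c_def fun_eq_iff field_simps scaleR_conv_of_real mult_ac)
  qed
  have "(ef \<xi> has_integral (F \<beta> - F \<alpha>)) {\<alpha>..\<beta>}"
    by (rule fundamental_theorem_of_calculus[OF assms(1)]) (use d in auto)
  then have "integral {\<alpha><..<\<beta>} (ef \<xi>) = F \<beta> - F \<alpha>"
    by (simp add: integral_open_interval_real[symmetric] integral_unique)
  also have "norm (F \<beta> - F \<alpha>) \<le> norm (F \<beta>) + norm (F \<alpha>)" by (rule norm_triangle_ineq4)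
  also have "\<dots> = 2 / \<bar>c\<bar>" by (simp add: F_def norm_divide norm_mult)
  also have "\<dots> = 1 / (pi * \<bar>\<xi>\<bar>)" by (simp add: c_def abs_mult)
  finally show ?thesis .
qed

lemma ef_interval:
  assumes "\<beta> - \<alpha> \<le> D" "0 \<le> D"
  shows "norm (integral {\<alpha><..<\<beta>} (ef \<xi>)) \<le> (1 + 2 * D) / (1 + \<bar>\<xi>\<bar>)"
proof (cases "\<alpha> \<le> \<beta>")
  case False
  then have "{\<alpha><..<\<beta>} = {}" by auto
  then show ?thesis using assms by simp
next
  case True
  show ?thesis
  proof (cases "\<bar>\<xi>\<bar> \<le> 1")
    case True': True
    have "D * \<bar>\<xi>\<bar> \<le> D * 1" using True' assms by (intro mult_left_mono) auto
    have "norm (integral {\<alpha><..<\<beta>} (ef \<xi>)) \<le> D" using ef_int_le_len[OF True, of \<xi>] assms by linarith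
    also have "D \<le> (1 + 2 * D) / (1 + \<bar>\<xi>\<bar>)" using True' assms \<open>D * \<bar>\<xi>\<bar> \<le> D * 1\<close>
      by (simp add: field_simps)
    finally show ?thesis .
  next
    case False
    then have x0: "\<xi> \<noteq> 0" by auto
    have "norm (integral {\<alpha><..<\<beta>} (ef \<xi>)) \<le> 1 / (pi * \<bar>\<xi>\<bar>)" using ef_int_le_xi[OF True x0] .
    also have "\<dots> \<le> 1 / (1 + \<bar>\<xi>\<bar>)"
    proof (rule divide_left_mono)
      have "3 * \<bar>\<xi>\<bar> \<le> pi * \<bar>\<xi>\<bar>" using pi_gt3 by (intro mult_right_mono) auto
      then show "1 + \<bar>\<xi>\<bar> \<le> pi * \<bar>\<xi>\<bar>" using False by linarith
    qed (use x0 in auto)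
    also have "\<dots> \<le> (1 + 2 * D) / (1 + \<bar>\<xi>\<bar>)" using assms by (intro divide_right_mono) auto
    finally show ?thesis .
  qed
qed

lemma ef_union_bound:
  fixes a b :: "nat \<Rightarrow> real"
  assumes "0 \<le> D"
  shows "(\<forall>j<n. b j - a j \<le> D) \<Longrightarrow>
    norm (integral (\<Union>j<n. {a j<..<b j}) (ef \<xi>)) \<le> (2 ^ n - 1) * ((1 + 2 * D) / (1 + \<bar>\<xi>\<bar>))"
proof (induction n arbitrary: a b)
  case 0
  then show ?case by simp
next
  case (Suc n)
  let ?K = "(1 + 2 * D) / (1 + \<bar>\<xi>\<bar>)"
  let ?U = "\<Union>j<n. {a j<..<b j}"
  let ?I = "{a n<..<b n}"
  define a' where "a' j = max (a j) (a n)" for j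
  define b' where "b' j = min (b j) (b n)" for j
  have eq1: "(\<Union>j<Suc n. {a j<..<b j}) = ?U \<union> ?I" by (auto simp: lessThan_Suc)
  have eq2: "?U \<inter> ?I = (\<Union>j<n. {a' j<..<b' j})" by (auto simp: a'_def b'_def)
  have "integral (\<Union>j<Suc n. {a j<..<b j}) (ef \<xi>) = integral ?U (ef \<xi>) + integral ?I (ef \<xi>) - integral (\<Union>j<n. {a' j<..<b' j}) (ef \<xi>)"
    unfolding eq1 eq2[symmetric] by (rule ef_Un) (auto intro: UN_lmeas)
  also have "norm \<dots> \<le> norm (integral ?U (ef \<xi>)) + norm (integral ?I (ef \<xi>)) + norm (integral (\<Union>j<n. {a' j<..<b' j}) (ef \<xi>))"
    by (smt (verit) norm_triangle_ineq norm_triangle_ineq4)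
  also have "\<dots> \<le> (2 ^ n - 1) * ?K + ?K + (2 ^ n - 1) * ?K"
  proof (intro add_mono)
    show "norm (integral ?U (ef \<xi>)) \<le> (2 ^ n - 1) * ?K" using Suc by auto
    show "norm (integral ?I (ef \<xi>)) \<le> ?K" using Suc.prems assms by (intro ef_interval) auto
    show "norm (integral (\<Union>j<n. {a' j<..<b' j}) (ef \<xi>)) \<le> (2 ^ n - 1) * ?K"
    proof (intro Suc.IH allI impI)
      fix j assume "j < n"
      then have "b j - a j \<le> D" using Suc.prems by auto
      then show "b' j - a' j \<le> D" by (simp add: a'_def b'_def)
    qed
  qed
  also have "\<dots> = (2 ^ Suc n - 1) * ?K" by (simp add: algebra_simps add_divide_distrib[symmetric])
  finally show ?case .
qed

lemma sep_sum:
  fixes F :: "real set"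
  assumes "finite F" "\<delta> > 0" "\<forall>x\<in>F. \<forall>y\<in>F. x \<noteq> y \<longrightarrow> \<delta> \<le> \<bar>x - y\<bar>"
  shows "\<forall>m>0. (\<forall>x\<in>F. m \<le> x) \<longrightarrow> (\<Sum>x\<in>F. 1 / x\<^sup>2) \<le> 1 / m\<^sup>2 + 1 / (\<delta> * m)"
  using assms(1)
proof (induction F rule: finite_remove_induct)
  case empty
  then show ?case using assms(2) by auto
next
  case (remove A)
  show ?case
  proof (intro allI impI)
    fix m :: real assume m: "m > 0" "\<forall>x\<in>A. m \<le> x"
    define x0 where "x0 = Min A"
    have x0A: "x0 \<in> A" using remove.hyps by (simp add: x0_def)
    have x0m: "m \<le> x0" using m x0A by auto
    have x0p: "x0 > 0" using m x0m by linarith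
    have ge: "\<forall>x\<in>A - {x0}. x0 + \<delta> \<le> x"
    proof
      fix x assume x: "x \<in> A - {x0}"
      then have "x0 \<le> x" using remove.hyps by (simp add: x0_def)
      moreover have "\<delta> \<le> \<bar>x - x0\<bar>" using x x0A assms(3) remove.hyps(3) by blast
      ultimately show "x0 + \<delta> \<le> x" by linarith
    qed
    have IH: "(\<Sum>x\<in>A - {x0}. 1 / x\<^sup>2) \<le> 1 / (x0 + \<delta>)\<^sup>2 + 1 / (\<delta> * (x0 + \<delta>))"
      using remove.IH[OF x0A] ge x0p assms(2) by auto
    have "(\<Sum>x\<in>A. 1 / x\<^sup>2) = 1 / x0\<^sup>2 + (\<Sum>x\<in>A - {x0}. 1 / x\<^sup>2)"
      using remove.hyps x0A by (simp add: sum.remove)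
    also have "\<dots> \<le> 1 / x0\<^sup>2 + (1 / (x0 + \<delta>)\<^sup>2 + 1 / (\<delta> * (x0 + \<delta>)))" using IH by simp
    also have "1 / (x0 + \<delta>)\<^sup>2 \<le> 1 / (x0 * (x0 + \<delta>))"
      using x0p assms(2) by (intro divide_left_mono) (auto simp: power2_eq_square intro!: mult_right_mono)
    then have "1 / x0\<^sup>2 + (1 / (x0 + \<delta>)\<^sup>2 + 1 / (\<delta> * (x0 + \<delta>))) \<le> 1 / x0\<^sup>2 + (1 / (x0 * (x0 + \<delta>)) + 1 / (\<delta> * (x0 + \<delta>)))"
      by simp
    also have "1 / (x0 * (x0 + \<delta>)) + 1 / (\<delta> * (x0 + \<delta>)) = 1 / (\<delta> * x0)"
    proof -
      have "x0 + \<delta> \<noteq> 0" "x0 \<noteq> 0" "\<delta> \<noteq> 0" using x0p assms(2) by auto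
      then show ?thesis by (simp add: divide_simps)
    qed
    also have "1 / x0\<^sup>2 \<le> 1 / m\<^sup>2" using x0m m by (intro divide_left_mono power_mono) auto
    also have "1 / (\<delta> * x0) \<le> 1 / (\<delta> * m)" using x0m m assms(2) by (intro divide_left_mono mult_left_mono) auto
    finally show "(\<Sum>x\<in>A. 1 / x\<^sup>2) \<le> 1 / m\<^sup>2 + 1 / (\<delta> * m)" by simp
  qed
qed

lemma sep_sum2:
  fixes G :: "real set"
  assumes "finite G" "\<delta> > 0" "\<forall>x\<in>G. \<forall>y\<in>G. x \<noteq> y \<longrightarrow> \<delta> \<le> \<bar>x - y\<bar>"
    "R > 0" "\<forall>x\<in>G. 1 + R \<le> x"
  shows "(\<Sum>x\<in>G. 1 / x\<^sup>2) \<le> (1 + 1 / \<delta>) / R"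
proof -
  have RR: "0 \<le> R * R" by simp
  have RR': "0 \<le> 1 + (R + R * R)" using RR assms(4) by linarith
  have "(\<Sum>x\<in>G. 1 / x\<^sup>2) \<le> 1 / (1 + R)\<^sup>2 + 1 / (\<delta> * (1 + R))"
    using sep_sum[OF assms(1-3)] assms(4,5) by auto
  also have "1 / (1 + R)\<^sup>2 \<le> 1 / R"
  proof (rule divide_left_mono)
    show "R \<le> (1 + R)\<^sup>2" using RR RR' by (simp add: power2_eq_square algebra_simps)
  qed (use assms(4) in \<open>auto intro!: mult_pos_pos\<close>)
  also have "1 / (\<delta> * (1 + R)) \<le> 1 / (\<delta> * R)"
    using assms(2,4) by (intro divide_left_mono mult_left_mono) auto
  also have "1 / R + 1 / (\<delta> * R) = (1 + 1 / \<delta>) / R"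
    by (simp add: add_divide_distrib)
  finally show ?thesis by simp
qed

lemma ef_fourier: "indicator_fourier S \<xi> = integral S (ef \<xi>)"
  by (simp add: indicator_fourier_def ef_def[abs_def])

theorem lemma1:
  fixes n :: nat and a b :: "nat \<Rightarrow> real" and \<delta> :: real
  assumes "\<delta> > 0"
  shows "\<exists>C>0. \<forall>A :: real set.
           (\<forall>x\<in>A. \<forall>y\<in>A. x \<noteq> y \<longrightarrow> \<bar>x - y\<bar> \<ge> \<delta>) \<longrightarrow>
           (\<forall>R>0.
              (\<lambda>\<xi>. (cmod (indicator_fourier (\<Union>j<n. {a j<..<b j}) \<xi>))\<^sup>2)
                summable_on {\<xi>\<in>A. \<bar>\<xi>\<bar> > R} \<and>
              (\<Sum>\<^sub>\<infinity>\<xi>\<in>{\<xi>\<in>A. \<bar>\<xi>\<bar> > R}.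
                 (cmod (indicator_fourier (\<Union>j<n. {a j<..<b j}) \<xi>))\<^sup>2) \<le> C / R)"
proof -
  define \<Omega> where "\<Omega> = (\<Union>j<n. {a j<..<b j})"
  define g where "g \<xi> = (cmod (indicator_fourier \<Omega> \<xi>))\<^sup>2" for \<xi>
  define D where "D = (\<Sum>j<n. \<bar>b j - a j\<bar>)"
  define K where "K = (2 ^ n - 1) * (1 + 2 * D)"
  define C where "C = 2 * K\<^sup>2 * (1 + 1 / \<delta>) + 1"
  have D0: "0 \<le> D" by (simp add: D_def sum_nonneg)
  have Dj: "\<forall>j<n. b j - a j \<le> D"
  proof (intro allI impI)
    fix j assume "j < n"
    then have "\<bar>b j - a j\<bar> \<le> D" unfolding D_def
      by (intro member_le_sum) auto
    then show "b j - a j \<le> D" by linarith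
  qed
  have K0: "0 \<le> K" using D0 by (simp add: K_def)
  have gb: "g \<xi> \<le> K\<^sup>2 / (1 + \<bar>\<xi>\<bar>)\<^sup>2" for \<xi>
  proof -
    have "cmod (indicator_fourier \<Omega> \<xi>) \<le> (2 ^ n - 1) * ((1 + 2 * D) / (1 + \<bar>\<xi>\<bar>))"
      unfolding ef_fourier \<Omega>_def by (rule ef_union_bound[OF D0 Dj])
    also have "\<dots> = K / (1 + \<bar>\<xi>\<bar>)" by (simp add: K_def)
    finally have "(cmod (indicator_fourier \<Omega> \<xi>))\<^sup>2 \<le> (K / (1 + \<bar>\<xi>\<bar>))\<^sup>2"
      by (intro power_mono) auto
    then show ?thesis by (simp add: g_def power_divide)
  qed
  have g0: "0 \<le> g \<xi>" for \<xi> by (simp add: g_def)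
  have "0 \<le> 2 * K\<^sup>2 * (1 + 1 / \<delta>)" using assms by (intro mult_nonneg_nonneg) auto
  then have C0: "C > 0" unfolding C_def by linarith
  have fin: "sum g F \<le> C / R"
    if A: "\<forall>x\<in>A. \<forall>y\<in>A. x \<noteq> y \<longrightarrow> \<bar>x - y\<bar> \<ge> \<delta>" and R: "R > 0"
      and F: "finite F" "F \<subseteq> {\<xi>\<in>A. \<bar>\<xi>\<bar> > R}" for A F and R :: real
  proof -
    define F1 where "F1 = {x\<in>F. x > R}"
    define F2 where "F2 = {x\<in>F. x < - R}"
    have Fu: "F = F1 \<union> F2" using F R by (auto simp: F1_def F2_def)
    have fin12: "finite F1" "finite F2" using F by (auto simp: F1_def F2_def)
    have disj: "F1 \<inter> F2 = {}" using R by (auto simp: F1_def F2_def)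
    have sepF: "\<forall>x\<in>F. \<forall>y\<in>F. x \<noteq> y \<longrightarrow> \<delta> \<le> \<bar>x - y\<bar>" using A F by blast
    have s1: "sum g F1 \<le> K\<^sup>2 * ((1 + 1 / \<delta>) / R)"
    proof -
      have "sum g F1 \<le> (\<Sum>x\<in>F1. K\<^sup>2 * (1 / (1 + x)\<^sup>2))"
      proof (rule sum_mono)
        fix x assume "x \<in> F1"
        then have "\<bar>x\<bar> = x" using R by (auto simp: F1_def)
        then show "g x \<le> K\<^sup>2 * (1 / (1 + x)\<^sup>2)" using gb[of x] by (simp add: power_divide)
      qed
      also have "\<dots> = K\<^sup>2 * (\<Sum>y\<in>(\<lambda>x. 1 + x) ` F1. 1 / y\<^sup>2)"
        by (simp add: sum_distrib_left sum.reindex inj_on_def)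
      also have "\<dots> \<le> K\<^sup>2 * ((1 + 1 / \<delta>) / R)"
      proof (intro mult_left_mono sep_sum2[OF _ assms _ R])
        show "\<forall>x\<in>(\<lambda>x. 1 + x) ` F1. \<forall>y\<in>(\<lambda>x. 1 + x) ` F1. x \<noteq> y \<longrightarrow> \<delta> \<le> \<bar>x - y\<bar>"
          using sepF by (auto simp: F1_def)
        show "\<forall>x\<in>(\<lambda>x. 1 + x) ` F1. 1 + R \<le> x" by (auto simp: F1_def)
      qed (use fin12 in auto)
      finally show ?thesis .
    qed
    have s2: "sum g F2 \<le> K\<^sup>2 * ((1 + 1 / \<delta>) / R)"
    proof -
      have "sum g F2 \<le> (\<Sum>x\<in>F2. K\<^sup>2 * (1 / (1 - x)\<^sup>2))"
      proof (rule sum_mono)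
        fix x assume "x \<in> F2"
        then have "\<bar>x\<bar> = - x" using R by (auto simp: F2_def)
        then show "g x \<le> K\<^sup>2 * (1 / (1 - x)\<^sup>2)" using gb[of x] by (simp add: power_divide)
      qed
      also have "\<dots> = K\<^sup>2 * (\<Sum>y\<in>(\<lambda>x. 1 - x) ` F2. 1 / y\<^sup>2)"
        by (simp add: sum_distrib_left sum.reindex inj_on_def)
      also have "\<dots> \<le> K\<^sup>2 * ((1 + 1 / \<delta>) / R)"
      proof (intro mult_left_mono sep_sum2[OF _ assms _ R])
        show "\<forall>x\<in>(\<lambda>x. 1 - x) ` F2. \<forall>y\<in>(\<lambda>x. 1 - x) ` F2. x \<noteq> y \<longrightarrow> \<delta> \<le> \<bar>x - y\<bar>"
          using sepF by (auto simp: F2_def abs_minus_commute)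
        show "\<forall>x\<in>(\<lambda>x. 1 - x) ` F2. 1 + R \<le> x" by (auto simp: F2_def)
      qed (use fin12 in auto)
      finally show ?thesis .
    qed
    have "sum g F = sum g F1 + sum g F2" using Fu fin12 disj by (simp add: sum.union_disjoint)
    also have "\<dots> \<le> 2 * K\<^sup>2 * (1 + 1 / \<delta>) / R" using s1 s2 by simp
    also have "\<dots> \<le> C / R" using R by (intro divide_right_mono) (auto simp: C_def)
    finally show ?thesis .
  qed
  have "\<forall>A :: real set. (\<forall>x\<in>A. \<forall>y\<in>A. x \<noteq> y \<longrightarrow> \<bar>x - y\<bar> \<ge> \<delta>) \<longrightarrow>
           (\<forall>R>0. g summable_on {\<xi>\<in>A. \<bar>\<xi>\<bar> > R} \<and> (\<Sum>\<^sub>\<infinity>\<xi>\<in>{\<xi>\<in>A. \<bar>\<xi>\<bar> > R}. g \<xi>) \<le> C / R)"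
  proof (intro allI impI conjI)
    fix A :: "real set" and R :: real
    assume A: "\<forall>x\<in>A. \<forall>y\<in>A. x \<noteq> y \<longrightarrow> \<bar>x - y\<bar> \<ge> \<delta>" and R: "R > 0"
    show sm: "g summable_on {\<xi>\<in>A. \<bar>\<xi>\<bar> > R}"
      by (rule nonneg_bdd_above_summable_on) (use g0 fin[OF A R] in \<open>auto intro!: bdd_aboveI\<close>)
    show "(\<Sum>\<^sub>\<infinity>\<xi>\<in>{\<xi>\<in>A. \<bar>\<xi>\<bar> > R}. g \<xi>) \<le> C / R"
      by (rule infsum_le_finite_sums[OF sm]) (use fin[OF A R] in auto)
  qed
  then show ?thesis using C0 unfolding g_def \<Omega>_def by blast
qed

end
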